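(* Let $K\subseteq\mathbb{R}^d$ be compact, let $f\in C^1(K)$ and let $df:K\to\mathbb{R}^d$ be a continuous derivative of $f$ on $K$. Then for every rectifiable path $\gamma:[a,b]\to K$, $$\int_\gamma df=f(\gamma(b))-f(\gamma(a)).$$
   Context: A function $df:K\to\mathbb{R}^d$ (identifying linear functionals on $\mathbb{R}^d$ with vectors via the scalar product $\langle\cdot,\cdot\rangle$) is a derivative of $f:K\to\mathbb{R}$ on $K$ if for every $x\in K$, $\lim_{y\to x,\,y\in K\setminus\{x\}}\frac{f(y)-f(x)-\langle df(x),y-x\rangle}{|y-x|}=0$. $C^1(K)$ is the set of $f:K\to\mathbb{R}$ admitting a continuous derivative on $K$. A path $\gamma:[a,b]\to K$ is a continuous map; its length is $L(\gamma)=\sup\{\sum_{j=1}^n|\gamma(t_j)-\gamma(t_{j-1})|: a=t_0<\dots<t_n=b\}$, and $\gamma$ is rectifiable if $L(\gamma)<\infty$. For continuous $F:K\to\mathbb{R}^d$ and rectifiable $\gamma$, the path integral $\int_\gamma F$ is the limit of the Riemann–Stieltjes sums $\sum_{j=1}^n\langle F(\gamma(\tau_j)),\gamma(t_j)-\gamma(t_{j-1})\rangle$ over partitions $a=t_0<\dots<t_n=b$ with mesh tending to $0$ and $t_{j-1}\le\tau_j\le t_j$. *)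

theory Defs
  imports "HOL-Analysis.Analysis"
begin

text \<open>df is a derivative of f on K (linear functionals identified with vectors via the inner product).\<close>
definition is_derivative_on ::
  "('a::euclidean_space \<Rightarrow> real) \<Rightarrow> ('a \<Rightarrow> 'a) \<Rightarrow> 'a set \<Rightarrow> bool" where
  "is_derivative_on f df K \<longleftrightarrow>
     (\<forall>x\<in>K. ((\<lambda>y. (f y - f x - df x \<bullet> (y - x)) / norm (y - x)) \<longlongrightarrow> 0)
               (at x within (K - {x})))"

definition is_partition :: "real \<Rightarrow> real \<Rightarrow> nat \<Rightarrow> (nat \<Rightarrow> real) \<Rightarrow> bool" where
  "is_partition a b n t \<longleftrightarrow> t 0 = a \<and> t n = b \<and> (\<forall>j<n. t j < t (Suc j))"

definition polygonal_sums :: "(real \<Rightarrow> 'a::euclidean_space) \<Rightarrow> real \<Rightarrow> real \<Rightarrow> real set" where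
  "polygonal_sums \<gamma> a b =
     {\<Sum>j\<in>{1..n}. norm (\<gamma> (t j) - \<gamma> (t (j - 1))) | n t. is_partition a b n t}"

definition path_len :: "(real \<Rightarrow> 'a::euclidean_space) \<Rightarrow> real \<Rightarrow> real \<Rightarrow> real" where
  "path_len \<gamma> a b = Sup (polygonal_sums \<gamma> a b)"

definition rectifiable :: "(real \<Rightarrow> 'a::euclidean_space) \<Rightarrow> real \<Rightarrow> real \<Rightarrow> bool" where
  "rectifiable \<gamma> a b \<longleftrightarrow> bdd_above (polygonal_sums \<gamma> a b)"

definition has_RS_path_integral ::
  "('a::euclidean_space \<Rightarrow> 'a) \<Rightarrow> (real \<Rightarrow> 'a) \<Rightarrow> real \<Rightarrow> real \<Rightarrow> real \<Rightarrow> bool" where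
  "has_RS_path_integral F \<gamma> a b I \<longleftrightarrow>
     (\<forall>\<epsilon>>0. \<exists>\<delta>>0. \<forall>n t \<tau>.
        is_partition a b n t \<and> (\<forall>j\<in>{1..n}. t j - t (j - 1) < \<delta>) \<and>
        (\<forall>j\<in>{1..n}. t (j - 1) \<le> \<tau> j \<and> \<tau> j \<le> t j)
        \<longrightarrow> \<bar>(\<Sum>j\<in>{1..n}. F (\<gamma> (\<tau> j)) \<bullet> (\<gamma> (t j) - \<gamma> (t (j - 1)))) - I\<bar> < \<epsilon>)"

end

theory Submission
  imports Defs
begin


lemma ps_nonneg: "x \<in> polygonal_sums \<gamma> u v \<Longrightarrow> 0 \<le> x"
  unfolding polygonal_sums_def by (auto intro!: sum_nonneg)

lemma ps_intro:
  assumes "is_partition u v n t" "x = (\<Sum>j\<in>{1..n}. norm (\<gamma> (t j) - \<gamma> (t (j - 1))))"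
  shows "x \<in> polygonal_sums \<gamma> u v"
  unfolding polygonal_sums_def using assms by blast

lemma ps_single:
  assumes "u \<le> v" shows "norm (\<gamma> v - \<gamma> u) \<in> polygonal_sums \<gamma> u v"
proof (cases "u = v")
  case True
  have "is_partition u v 0 (\<lambda>_. u)" using True by (simp add: is_partition_def)
  then show ?thesis by (rule ps_intro) (simp add: True)
next
  case False
  then have "u < v" using assms by simp
  then have "is_partition u v 1 (\<lambda>i. if i = 0 then u else v)" by (simp add: is_partition_def)
  moreover have "(\<Sum>j\<in>{1..1::nat}. norm (\<gamma> ((\<lambda>i. if i = 0 then u else v) j) - \<gamma> ((\<lambda>i. if i = 0 then u else v) (j - 1)))) = norm (\<gamma> v - \<gamma> u)"
    by simp
  ultimately show ?thesis by (intro ps_intro) auto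
qed

lemma ps_concat:
  assumes "p \<in> polygonal_sums \<gamma> u s" "q \<in> polygonal_sums \<gamma> s w"
  shows "p + q \<in> polygonal_sums \<gamma> u w"
proof -
  obtain n1 t1 where P1: "is_partition u s n1 t1" and p: "p = (\<Sum>j\<in>{1..n1}. norm (\<gamma> (t1 j) - \<gamma> (t1 (j - 1))))"
    using assms(1) unfolding polygonal_sums_def by blast
  obtain n2 t2 where P2: "is_partition s w n2 t2" and q: "q = (\<Sum>j\<in>{1..n2}. norm (\<gamma> (t2 j) - \<gamma> (t2 (j - 1))))"
    using assms(2) unfolding polygonal_sums_def by blast
  define t where "t i = (if i \<le> n1 then t1 i else t2 (i - n1))" for i
  have "is_partition u w (n1 + n2) t"
    unfolding is_partition_def
  proof (intro conjI allI impI)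
    show "t 0 = u" using P1 by (simp add: t_def is_partition_def)
    show "t (n1 + n2) = w"
    proof (cases "n2 = 0")
      case True
      then have "s = w" using P2 by (simp add: is_partition_def)
      then show ?thesis using True P1 by (simp add: t_def is_partition_def)
    next
      case False then show ?thesis using P2 by (simp add: t_def is_partition_def)
    qed
    fix j assume j: "j < n1 + n2"
    show "t j < t (Suc j)"
    proof -
      consider "Suc j \<le> n1" | "j = n1" | "j > n1" by linarith
      then show ?thesis
      proof cases
        case 1 then show ?thesis using P1 by (simp add: t_def is_partition_def)
      next
        case 2
        then have "t j = s" "t (Suc j) = t2 1" using P1 by (auto simp: t_def is_partition_def)
        moreover have "t2 0 < t2 1" using P2 j 2 unfolding is_partition_def by auto
        ultimately show ?thesis using P2 by (simp add: is_partition_def)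
      next
        case 3
        then have "t j = t2 (j - n1)" "t (Suc j) = t2 (Suc (j - n1))"
          by (auto simp: t_def Suc_diff_le)
        then show ?thesis using P2 j 3 unfolding is_partition_def by auto
      qed
    qed
  qed
  moreover have "(\<Sum>j\<in>{1..n1+n2}. norm (\<gamma> (t j) - \<gamma> (t (j - 1)))) = p + q"
  proof -
    have "(\<Sum>j\<in>{1..n1+n2}. norm (\<gamma> (t j) - \<gamma> (t (j - 1)))) =
      (\<Sum>j\<in>{1..n1}. norm (\<gamma> (t j) - \<gamma> (t (j - 1)))) + (\<Sum>j\<in>{n1+1..n1+n2}. norm (\<gamma> (t j) - \<gamma> (t (j - 1))))"
      by (rule sum.ub_add_nat) simp
    also have "(\<Sum>j\<in>{1..n1}. norm (\<gamma> (t j) - \<gamma> (t (j - 1)))) = p"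
      unfolding p by (rule sum.cong) (auto simp: t_def)
    also have "(\<Sum>j\<in>{n1+1..n1+n2}. norm (\<gamma> (t j) - \<gamma> (t (j - 1)))) =
        (\<Sum>i\<in>{1..n2}. norm (\<gamma> (t (i + n1)) - \<gamma> (t (i + n1 - 1))))"
      using sum.shift_bounds_cl_nat_ivl[of "\<lambda>j. norm (\<gamma> (t j) - \<gamma> (t (j - 1)))" 1 n1 n2]
      by (simp add: add.commute)
    also have "\<dots> = q" unfolding q
    proof (rule sum.cong)
      fix i assume i: "i \<in> {1..n2}"
      have "t (i + n1) = t2 i" using i by (auto simp: t_def)
      moreover have "t (i + n1 - 1) = t2 (i - 1)"
      proof (cases "i = 1")
        case True then show ?thesis using P1 P2 by (simp add: t_def is_partition_def)
      next
        case False then show ?thesis using i by (auto simp: t_def)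
      qed
      ultimately show "norm (\<gamma> (t (i + n1)) - \<gamma> (t (i + n1 - 1))) = norm (\<gamma> (t2 i) - \<gamma> (t2 (i - 1)))" by simp
    qed simp
    finally show ?thesis .
  qed
  ultimately show ?thesis by (intro ps_intro) auto
qed

lemma ps_bdd:
  assumes "rectifiable \<gamma> a b" "a \<le> u" "u \<le> v" "v \<le> b"
  shows "bdd_above (polygonal_sums \<gamma> u v)"
proof -
  obtain B where B: "\<And>x. x \<in> polygonal_sums \<gamma> a b \<Longrightarrow> x \<le> B"
    using assms(1) unfolding rectifiable_def bdd_above_def by blast
  show ?thesis unfolding bdd_above_def
  proof (intro exI ballI)
    fix x assume x: "x \<in> polygonal_sums \<gamma> u v"
    let ?p1 = "norm (\<gamma> u - \<gamma> a)" and ?p2 = "norm (\<gamma> b - \<gamma> v)"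
    have "?p1 + x + ?p2 \<in> polygonal_sums \<gamma> a b"
      by (intro ps_concat[OF ps_concat[OF ps_single x] ps_single] assms)
    then have "?p1 + x + ?p2 \<le> B" by (rule B)
    then show "x \<le> B" by (smt (verit) norm_ge_zero)
  qed
qed

lemma V_upper:
  assumes "rectifiable \<gamma> a b" "a \<le> u" "u \<le> v" "v \<le> b" "x \<in> polygonal_sums \<gamma> u v"
  shows "x \<le> path_len \<gamma> u v"
  unfolding path_len_def using assms(5) ps_bdd[OF assms(1-4)] by (rule cSup_upper)

lemma V_nonneg:
  assumes "rectifiable \<gamma> a b" "a \<le> u" "u \<le> v" "v \<le> b"
  shows "0 \<le> path_len \<gamma> u v"
  using V_upper[OF assms ps_single[OF assms(3)]] by (smt (verit) norm_ge_zero)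

lemma V_norm:
  assumes "rectifiable \<gamma> a b" "a \<le> u" "u \<le> v" "v \<le> b"
  shows "norm (\<gamma> v - \<gamma> u) \<le> path_len \<gamma> u v"
  using V_upper[OF assms ps_single[OF assms(3)]] .

lemma V_add:
  assumes "rectifiable \<gamma> a b" "a \<le> u" "u \<le> s" "s \<le> w" "w \<le> b"
  shows "path_len \<gamma> u s + path_len \<gamma> s w \<le> path_len \<gamma> u w"
proof -
  have ne1: "polygonal_sums \<gamma> u s \<noteq> {}" using ps_single[OF assms(3)] by blast
  have ne2: "polygonal_sums \<gamma> s w \<noteq> {}" using ps_single[OF assms(4)] by blast
  have key: "x + y \<le> path_len \<gamma> u w" if "x \<in> polygonal_sums \<gamma> u s" "y \<in> polygonal_sums \<gamma> s w" for x y
    using V_upper[OF assms(1,2) _ assms(5) ps_concat[OF that]] assms by linarith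
  have "path_len \<gamma> u s \<le> path_len \<gamma> u w - y" if y: "y \<in> polygonal_sums \<gamma> s w" for y
    unfolding path_len_def[of \<gamma> u s] using ne1
    by (rule cSup_least) (use key[OF _ y] in \<open>auto simp: path_len_def algebra_simps\<close>)
  then have "path_len \<gamma> s w \<le> path_len \<gamma> u w - path_len \<gamma> u s"
    unfolding path_len_def[of \<gamma> s w] using ne2
    by (intro cSup_least) (auto simp: path_len_def algebra_simps)
  then show ?thesis by simp
qed

lemma partition_mono:
  assumes "is_partition a b n t" "i \<le> k" "k \<le> n"
  shows "t i \<le> t k"
  using assms(2,3)
proof (induction k)
  case 0 then show ?case by simp
next
  case (Suc k)
  show ?case
  proof (cases "i = Suc k")
    case False
    then have "t i \<le> t k" using Suc by simp
    also have "t k < t (Suc k)" using assms(1) Suc.prems unfolding is_partition_def by simp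
    finally show ?thesis by simp
  qed simp
qed

lemma V_sum:
  assumes "rectifiable \<gamma> a b" "is_partition a b n t" "m \<le> n"
  shows "(\<Sum>j\<in>{1..m}. path_len \<gamma> (t (j - 1)) (t j)) \<le> path_len \<gamma> (t 0) (t m)"
  using assms(3)
proof (induction m)
  case 0
  have "t 0 = a" "a \<le> b" using assms(2) partition_mono[OF assms(2), of 0 n] by (auto simp: is_partition_def)
  then show ?case using V_nonneg[OF assms(1), of a a] by simp
next
  case (Suc m)
  have tr: "a \<le> t i \<and> t i \<le> b" if "i \<le> n" for i
    using partition_mono[OF assms(2), of 0 i] partition_mono[OF assms(2), of i n] that assms(2)
    by (auto simp: is_partition_def)
  have "(\<Sum>j\<in>{1..Suc m}. path_len \<gamma> (t (j - 1)) (t j)) =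
      (\<Sum>j\<in>{1..m}. path_len \<gamma> (t (j - 1)) (t j)) + path_len \<gamma> (t m) (t (Suc m))" by simp
  also have "\<dots> \<le> path_len \<gamma> (t 0) (t m) + path_len \<gamma> (t m) (t (Suc m))" using Suc by simp
  also have "\<dots> \<le> path_len \<gamma> (t 0) (t (Suc m))"
    by (rule V_add[OF assms(1)]) (use tr Suc.prems partition_mono[OF assms(2)] in auto)
  finally show ?case .
qed



lemma sup_arg:
  fixes h :: "real \<Rightarrow> real" and V :: "real \<Rightarrow> real \<Rightarrow> real"
  assumes uv: "u \<le> v" and hc: "continuous_on {u..v} h" and C: "0 \<le> C"
    and Vadd: "\<And>x y z. u \<le> x \<Longrightarrow> x \<le> y \<Longrightarrow> y \<le> z \<Longrightarrow> z \<le> v \<Longrightarrow> V x y + V y z \<le> V x z"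
    and Vnn: "\<And>x y. u \<le> x \<Longrightarrow> x \<le> y \<Longrightarrow> y \<le> v \<Longrightarrow> 0 \<le> V x y"
    and loc: "\<And>w. u \<le> w \<Longrightarrow> w < v \<Longrightarrow> \<exists>\<rho>>0. \<forall>w'. w < w' \<and> w' < w + \<rho> \<and> w' \<le> v \<longrightarrow> \<bar>h w' - h w\<bar> \<le> C * V w w'"
  shows "\<bar>h v - h u\<bar> \<le> C * V u v"
proof -
  define S where "S = {w \<in> {u..v}. \<bar>h w - h u\<bar> \<le> C * V u w}"
  have uS: "u \<in> S" unfolding S_def using uv Vnn[of u u] C by auto
  have bdd: "bdd_above S" unfolding S_def bdd_above_def by auto
  define s where "s = Sup S"
  have us: "u \<le> s" unfolding s_def using uS bdd by (rule cSup_upper)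
  have sv: "s \<le> v" unfolding s_def using uS by (intro cSup_least) (auto simp: S_def)
  define T where "T = {u..v} \<inter> (\<lambda>w. \<bar>h w - h u\<bar>) -` {..C * V u s}"
  have cT: "closed T" unfolding T_def
    by (rule continuous_closed_preimage) (auto intro!: continuous_intros hc)
  have ST: "S \<subseteq> T"
  proof
    fix w assume w: "w \<in> S"
    then have "w \<le> s" unfolding s_def using bdd by (rule cSup_upper)
    then have "V u w \<le> V u s" using Vadd[of u w s] Vnn[of w s] w sv by (auto simp: S_def)
    then have "C * V u w \<le> C * V u s" using C by (rule mult_left_mono)
    then show "w \<in> T" using w by (auto simp: S_def T_def)
  qed
  have "s \<in> closure S" unfolding s_def using uS bdd by (intro closure_contains_Sup) auto
  then have "s \<in> T" using closure_minimal[OF ST cT] by blast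
  then have sS: "s \<in> S" using us sv by (auto simp: S_def T_def)
  show ?thesis
  proof (cases "s = v")
    case True then show ?thesis using sS by (simp add: S_def)
  next
    case False
    then have "s < v" using sv by simp
    then obtain \<rho> where \<rho>: "\<rho> > 0" "\<And>w'. s < w' \<Longrightarrow> w' < s + \<rho> \<Longrightarrow> w' \<le> v \<Longrightarrow> \<bar>h w' - h s\<bar> \<le> C * V s w'"
      using loc[OF us] by blast
    define w' where "w' = min v (s + \<rho>/2)"
    have w': "s < w'" "w' < s + \<rho>" "w' \<le> v" using \<rho>(1) \<open>s < v\<close> by (auto simp: w'_def)
    have "\<bar>h w' - h u\<bar> \<le> \<bar>h s - h u\<bar> + \<bar>h w' - h s\<bar>" by simp
    also have "\<dots> \<le> C * V u s + C * V s w'" using sS \<rho>(2)[OF w'] by (auto simp: S_def)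
    also have "\<dots> \<le> C * V u w'" using Vadd[of u s w'] us w' C
      by (simp add: distrib_left[symmetric] mult_left_mono)
    finally have "w' \<in> S" using us w' by (auto simp: S_def)
    then have "w' \<le> s" unfolding s_def using bdd by (rule cSup_upper)
    then show ?thesis using w' by simp
  qed
qed

lemma telescope: fixes n :: nat shows
  "(\<Sum>j\<in>{1..n}. g (t j) - g (t (j - 1))) = (g (t n) - g (t 0) :: real)"
  by (induction n) auto



lemma quot_aux:
  fixes A n e :: real
  assumes "\<bar>A / n\<bar> < e" "n > 0" shows "\<bar>A\<bar> \<le> e * n"
proof -
  have "\<bar>A\<bar> = \<bar>A / n\<bar> * n" using assms(2) by (simp add: abs_divide)
  also have "\<dots> \<le> e * n" using assms by (intro mult_right_mono) auto
  finally show ?thesis .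
qed

lemma local_est:
  fixes K :: "'a::euclidean_space set" and f :: "'a \<Rightarrow> real" and df :: "'a \<Rightarrow> 'a"
    and \<gamma> :: "real \<Rightarrow> 'a"
  assumes der: "is_derivative_on f df K" and gc: "continuous_on {a..b} \<gamma>" and gK: "\<gamma> ` {a..b} \<subseteq> K"
    and e: "e > 0" and w: "w \<in> {a..b}"
  shows "\<exists>\<rho>>0. \<forall>w'\<in>{a..b}. \<bar>w' - w\<bar> < \<rho> \<longrightarrow>
      \<bar>f (\<gamma> w') - f (\<gamma> w) - df (\<gamma> w) \<bullet> (\<gamma> w' - \<gamma> w)\<bar> \<le> e * norm (\<gamma> w' - \<gamma> w)"
proof -
  let ?x = "\<gamma> w"
  have xK: "?x \<in> K" using gK w by auto
  have "((\<lambda>y. (f y - f ?x - df ?x \<bullet> (y - ?x)) / norm (y - ?x)) \<longlongrightarrow> 0) (at ?x within (K - {?x}))"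
    using der xK unfolding is_derivative_on_def by blast
  then have "\<forall>\<^sub>F y in at ?x within (K - {?x}). dist ((f y - f ?x - df ?x \<bullet> (y - ?x)) / norm (y - ?x)) 0 < e"
    using e by (rule tendstoD)
  then obtain d where d: "d > 0" "\<forall>y\<in>K - {?x}. y \<noteq> ?x \<and> dist y ?x < d \<longrightarrow>
      dist ((f y - f ?x - df ?x \<bullet> (y - ?x)) / norm (y - ?x)) 0 < e"
    unfolding eventually_at by (elim exE conjE) (intro that)
  obtain \<rho> where \<rho>: "\<rho> > 0" "\<And>w'. w' \<in> {a..b} \<Longrightarrow> dist w' w < \<rho> \<Longrightarrow> dist (\<gamma> w') (\<gamma> w) < d"
    using gc w d(1) unfolding continuous_on_iff by blast
  show ?thesis
  proof (intro exI[of _ \<rho>] conjI ballI impI)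
    show "\<rho> > 0" by (rule \<rho>(1))
    fix w' assume w': "w' \<in> {a..b}" "\<bar>w' - w\<bar> < \<rho>"
    show "\<bar>f (\<gamma> w') - f (\<gamma> w) - df (\<gamma> w) \<bullet> (\<gamma> w' - \<gamma> w)\<bar> \<le> e * norm (\<gamma> w' - \<gamma> w)"
    proof (cases "\<gamma> w' = ?x")
      case True then show ?thesis by simp
    next
      case False
      have "dist (\<gamma> w') ?x < d" using \<rho>(2) w' by (simp add: dist_real_def)
      moreover have "\<gamma> w' \<in> K" using gK w' by auto
      ultimately have "\<bar>(f (\<gamma> w') - f ?x - df ?x \<bullet> (\<gamma> w' - ?x)) / norm (\<gamma> w' - ?x)\<bar> < e"
        using d(2) False by (simp add: dist_real_def)
      moreover have "norm (\<gamma> w' - ?x) > 0" using False by simp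
      ultimately show ?thesis by (rule quot_aux)
    qed
  qed
qed

lemma fg_cont:
  fixes K :: "'a::euclidean_space set" and f :: "'a \<Rightarrow> real" and df :: "'a \<Rightarrow> 'a"
    and \<gamma> :: "real \<Rightarrow> 'a"
  assumes der: "is_derivative_on f df K" and gc: "continuous_on {a..b} \<gamma>" and gK: "\<gamma> ` {a..b} \<subseteq> K"
  shows "continuous_on {a..b} (\<lambda>w. f (\<gamma> w))"
  unfolding continuous_on_iff
proof (intro ballI allI impI)
  fix w e :: real assume w: "w \<in> {a..b}" and e: "e > 0"
  obtain \<rho> where \<rho>: "\<rho> > 0" "\<And>w'. w' \<in> {a..b} \<Longrightarrow> \<bar>w' - w\<bar> < \<rho> \<Longrightarrow>
      \<bar>f (\<gamma> w') - f (\<gamma> w) - df (\<gamma> w) \<bullet> (\<gamma> w' - \<gamma> w)\<bar> \<le> 1 * norm (\<gamma> w' - \<gamma> w)"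
    using local_est[OF der gc gK zero_less_one w] by blast
  define M where "M = norm (df (\<gamma> w)) + 1"
  have M: "M > 0" by (simp add: M_def add_nonneg_pos)
  obtain d where d: "d > 0" "\<And>w'. w' \<in> {a..b} \<Longrightarrow> dist w' w < d \<Longrightarrow> dist (\<gamma> w') (\<gamma> w) < e / M"
  proof -
    have "e / M > 0" using e M by simp
    then show ?thesis using gc w that unfolding continuous_on_iff by blast
  qed
  show "\<exists>d>0. \<forall>w'\<in>{a..b}. dist w' w < d \<longrightarrow> dist (f (\<gamma> w')) (f (\<gamma> w)) < e"
  proof (intro exI[of _ "min d \<rho>"] conjI ballI impI)
    show "min d \<rho> > 0" using d \<rho> by simp
    fix w' assume w': "w' \<in> {a..b}" "dist w' w < min d \<rho>"
    have n: "norm (\<gamma> w' - \<gamma> w) < e / M" using d(2)[OF w'(1)] w'(2) by (simp add: dist_norm)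
    have "\<bar>f (\<gamma> w') - f (\<gamma> w)\<bar> \<le> \<bar>df (\<gamma> w) \<bullet> (\<gamma> w' - \<gamma> w)\<bar> + norm (\<gamma> w' - \<gamma> w)"
      using \<rho>(2)[OF w'(1)] w'(2) by (simp add: dist_real_def)
    also have "\<dots> \<le> norm (df (\<gamma> w)) * norm (\<gamma> w' - \<gamma> w) + norm (\<gamma> w' - \<gamma> w)"
      using Cauchy_Schwarz_ineq2 by simp
    also have "\<dots> = M * norm (\<gamma> w' - \<gamma> w)" by (simp add: M_def algebra_simps)
    also have "\<dots> < M * (e / M)" using n M by (rule mult_strict_left_mono)
    also have "\<dots> = e" using M by simp
    finally show "dist (f (\<gamma> w')) (f (\<gamma> w)) < e" by (simp add: dist_real_def)
  qed
qed



theorem mainTheorem2: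
  fixes K :: "'a::euclidean_space set" and f :: "'a \<Rightarrow> real" and df :: "'a \<Rightarrow> 'a"
    and \<gamma> :: "real \<Rightarrow> 'a" and a b :: real
  assumes "compact K"
    and "is_derivative_on f df K" and "continuous_on K df"
    and "a \<le> b" and "continuous_on {a..b} \<gamma>" and "\<gamma> ` {a..b} \<subseteq> K"
    and "rectifiable \<gamma> a b"
  shows "has_RS_path_integral df \<gamma> a b (f (\<gamma> b) - f (\<gamma> a))"
proof -
  note der = assms(2) and dfc = assms(3) and ab = assms(4) and gc = assms(5) and gK = assms(6)
    and rect = assms(7)
  show ?thesis unfolding has_RS_path_integral_def
  proof (intro allI impI)
    fix \<epsilon> :: real assume \<epsilon>: "\<epsilon> > 0"
    define L where "L = path_len \<gamma> a b"
    have L0: "0 \<le> L" unfolding L_def using V_nonneg[OF rect, of a b] ab by simp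
    define e1 where "e1 = \<epsilon> / (4 * (L + 1))"
    have e1: "e1 > 0" unfolding e1_def using \<epsilon> L0 by simp
    have "continuous_on {a..b} (df \<circ> \<gamma>)"
      by (rule continuous_on_compose[OF gc continuous_on_subset[OF dfc gK]])
    then have "uniformly_continuous_on {a..b} (df \<circ> \<gamma>)"
      by (intro compact_uniformly_continuous) auto
    then obtain \<delta> where \<delta>: "\<delta> > 0"
      "\<And>x x'. x \<in> {a..b} \<Longrightarrow> x' \<in> {a..b} \<Longrightarrow> dist x' x < \<delta> \<Longrightarrow> dist (df (\<gamma> x')) (df (\<gamma> x)) < e1"
      using e1 unfolding uniformly_continuous_on_def by (metis comp_apply)
    show "\<exists>\<delta>>0. \<forall>n t \<tau>. is_partition a b n t \<and> (\<forall>j\<in>{1..n}. t j - t (j - 1) < \<delta>) \<and>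
        (\<forall>j\<in>{1..n}. t (j - 1) \<le> \<tau> j \<and> \<tau> j \<le> t j) \<longrightarrow>
        \<bar>(\<Sum>j\<in>{1..n}. df (\<gamma> (\<tau> j)) \<bullet> (\<gamma> (t j) - \<gamma> (t (j - 1)))) - (f (\<gamma> b) - f (\<gamma> a))\<bar> < \<epsilon>"
    proof (intro exI[of _ \<delta>] conjI allI impI)
      show "\<delta> > 0" by (rule \<delta>(1))
      fix n t \<tau>
      assume H: "is_partition a b n t \<and> (\<forall>j\<in>{1..n}. t j - t (j - 1) < \<delta>) \<and>
        (\<forall>j\<in>{1..n}. t (j - 1) \<le> \<tau> j \<and> \<tau> j \<le> t j)"
      then have P: "is_partition a b n t" and mesh: "\<And>j. j \<in> {1..n} \<Longrightarrow> t j - t (j - 1) < \<delta>"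
        and tag: "\<And>j. j \<in> {1..n} \<Longrightarrow> t (j - 1) \<le> \<tau> j \<and> \<tau> j \<le> t j" by auto
      have tr: "a \<le> t i \<and> t i \<le> b" if "i \<le> n" for i
        using partition_mono[OF P, of 0 i] partition_mono[OF P, of i n] that P
        by (auto simp: is_partition_def)
      have per: "\<bar>f (\<gamma> (t j)) - f (\<gamma> (t (j - 1))) - df (\<gamma> (\<tau> j)) \<bullet> (\<gamma> (t j) - \<gamma> (t (j - 1)))\<bar>
          \<le> (2 * e1) * path_len \<gamma> (t (j - 1)) (t j)" if j: "j \<in> {1..n}" for j
      proof -
        define u where "u = t (j - 1)"
        define v where "v = t j"
        define c where "c = df (\<gamma> (\<tau> j))"
        have uv: "u \<le> v" "a \<le> u" "v \<le> b" using partition_mono[OF P, of "j - 1" j] tr[of "j - 1"] tr[of j] j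
          by (auto simp: u_def v_def)
        have tj: "u \<le> \<tau> j" "\<tau> j \<le> v" using tag[OF j] by (auto simp: u_def v_def)
        have close: "norm (df (\<gamma> w) - c) < e1" if w: "w \<in> {u..v}" for w
        proof -
          have "dist w (\<tau> j) < \<delta>" using w tj mesh[OF j] by (auto simp: dist_real_def u_def v_def)
          then have "dist (df (\<gamma> w)) (df (\<gamma> (\<tau> j))) < e1"
            using \<delta>(2)[of "\<tau> j" w] w tj uv by auto
          then show ?thesis by (simp add: dist_norm c_def)
        qed
        define h where "h w = f (\<gamma> w) - c \<bullet> \<gamma> w" for w
        have hc: "continuous_on {u..v} h"
        proof -
          have s: "{u..v} \<subseteq> {a..b}" using uv by auto
          have "continuous_on {u..v} (\<lambda>w. f (\<gamma> w))"
            using continuous_on_subset[OF fg_cont[OF der gc gK] s] .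
          moreover have "continuous_on {u..v} \<gamma>" using continuous_on_subset[OF gc s] .
          ultimately show ?thesis unfolding h_def by (intro continuous_intros)
        qed
        have "\<bar>h v - h u\<bar> \<le> (2 * e1) * path_len \<gamma> u v"
        proof (rule sup_arg[OF uv(1) hc])
          show "0 \<le> 2 * e1" using e1 by simp
          show "path_len \<gamma> x y + path_len \<gamma> y z \<le> path_len \<gamma> x z"
            if "u \<le> x" "x \<le> y" "y \<le> z" "z \<le> v" for x y z
            using V_add[OF rect, of x y z] that uv by simp
          show "0 \<le> path_len \<gamma> x y" if "u \<le> x" "x \<le> y" "y \<le> v" for x y
            using V_nonneg[OF rect, of x y] that uv by simp
          fix w assume w: "u \<le> w" "w < v"
          have wab: "w \<in> {a..b}" using w uv by auto
          obtain \<rho> where \<rho>: "\<rho> > 0" "\<And>w'. w' \<in> {a..b} \<Longrightarrow> \<bar>w' - w\<bar> < \<rho> \<Longrightarrow>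
              \<bar>f (\<gamma> w') - f (\<gamma> w) - df (\<gamma> w) \<bullet> (\<gamma> w' - \<gamma> w)\<bar> \<le> e1 * norm (\<gamma> w' - \<gamma> w)"
            using local_est[OF der gc gK e1 wab] by blast
          show "\<exists>\<rho>>0. \<forall>w'. w < w' \<and> w' < w + \<rho> \<and> w' \<le> v \<longrightarrow> \<bar>h w' - h w\<bar> \<le> 2 * e1 * path_len \<gamma> w w'"
          proof (intro exI[of _ \<rho>] conjI allI impI)
            show "\<rho> > 0" by (rule \<rho>(1))
            fix w' assume w': "w < w' \<and> w' < w + \<rho> \<and> w' \<le> v"
            have w'ab: "w' \<in> {a..b}" using w' w uv by auto
            let ?D = "\<gamma> w' - \<gamma> w"
            have eq: "h w' - h w = (f (\<gamma> w') - f (\<gamma> w) - df (\<gamma> w) \<bullet> ?D) + (df (\<gamma> w) - c) \<bullet> ?D"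
              by (simp add: h_def inner_diff_left inner_diff_right algebra_simps)
            have b1: "\<bar>f (\<gamma> w') - f (\<gamma> w) - df (\<gamma> w) \<bullet> ?D\<bar> \<le> e1 * norm ?D"
              using \<rho>(2)[OF w'ab] w' by simp
            have "\<bar>(df (\<gamma> w) - c) \<bullet> ?D\<bar> \<le> norm (df (\<gamma> w) - c) * norm ?D"
              by (rule Cauchy_Schwarz_ineq2)
            also have "\<dots> \<le> e1 * norm ?D"
              using close[of w] w uv by (intro mult_right_mono) auto
            finally have b2: "\<bar>(df (\<gamma> w) - c) \<bullet> ?D\<bar> \<le> e1 * norm ?D" .
            have "\<bar>h w' - h w\<bar> \<le> 2 * e1 * norm ?D" unfolding eq using b1 b2 by linarith
            also have "\<dots> \<le> 2 * e1 * path_len \<gamma> w w'"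
              using V_norm[OF rect, of w w'] w w' uv e1 by (intro mult_left_mono) auto
            finally show "\<bar>h w' - h w\<bar> \<le> 2 * e1 * path_len \<gamma> w w'" .
          qed
        qed
        moreover have "h v - h u = f (\<gamma> v) - f (\<gamma> u) - c \<bullet> (\<gamma> v - \<gamma> u)"
          by (simp add: h_def inner_diff_right)
        ultimately show ?thesis by (simp add: u_def v_def c_def)
      qed
      have tel: "(\<Sum>j\<in>{1..n}. f (\<gamma> (t j)) - f (\<gamma> (t (j - 1)))) = f (\<gamma> b) - f (\<gamma> a)"
        using telescope[of "\<lambda>s. f (\<gamma> s)" t n] P by (simp add: is_partition_def)
      have "\<bar>(\<Sum>j\<in>{1..n}. df (\<gamma> (\<tau> j)) \<bullet> (\<gamma> (t j) - \<gamma> (t (j - 1)))) - (f (\<gamma> b) - f (\<gamma> a))\<bar>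
          = \<bar>\<Sum>j\<in>{1..n}. f (\<gamma> (t j)) - f (\<gamma> (t (j - 1))) - df (\<gamma> (\<tau> j)) \<bullet> (\<gamma> (t j) - \<gamma> (t (j - 1)))\<bar>"
        unfolding tel[symmetric] sum_subtractf by (simp add: abs_minus_commute)
      also have "\<dots> \<le> (\<Sum>j\<in>{1..n}. \<bar>f (\<gamma> (t j)) - f (\<gamma> (t (j - 1))) - df (\<gamma> (\<tau> j)) \<bullet> (\<gamma> (t j) - \<gamma> (t (j - 1)))\<bar>)"
        by (rule sum_abs)
      also have "\<dots> \<le> (\<Sum>j\<in>{1..n}. (2 * e1) * path_len \<gamma> (t (j - 1)) (t j))"
        by (rule sum_mono) (rule per)
      also have "\<dots> = (2 * e1) * (\<Sum>j\<in>{1..n}. path_len \<gamma> (t (j - 1)) (t j))"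
        by (simp add: sum_distrib_left)
      also have "\<dots> \<le> (2 * e1) * L"
        using V_sum[OF rect P order_refl] P e1 unfolding L_def
        by (intro mult_left_mono) (auto simp: is_partition_def)
      also have "\<dots> < \<epsilon>"
      proof -
        have "(2 * e1) * L = \<epsilon> * (L / (2 * (L + 1)))" unfolding e1_def using L0 by (simp add: field_simps)
        also have "\<dots> < \<epsilon> * 1" using \<epsilon> L0 by (intro mult_strict_left_mono) (auto simp: field_simps)
        finally show ?thesis by simp
      qed
      finally show "\<bar>(\<Sum>j\<in>{1..n}. df (\<gamma> (\<tau> j)) \<bullet> (\<gamma> (t j) - \<gamma> (t (j - 1)))) - (f (\<gamma> b) - f (\<gamma> a))\<bar> < \<epsilon>" .
    qed
  qed
qed

end
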